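(* Let $M\ge 4N-2$. Then a generic $N$-dimensional complex subspace $W\subset\mathbb C^M$ has the property: if $v=(v_1,\dots,v_M)$ and $w=(w_1,\dots,w_M)$ are vectors in $W$ with $|v_i|=|w_i|$ for all $i$, then $v=\lambda w$ for some $\lambda\in\mathbb C$ with $|\lambda|=1$.
   Context: "Generic" means: for all $W$ in an open dense subset of the complex Grassmannian $Gr(N,M)^{\mathbb C}$ of $N$-dimensional complex subspaces of $\mathbb C^M$. *)

theory Defs
  imports "HOL-Analysis.Analysis"
begin

text \<open>Frames: complex M x N matrices (M = CARD('m), N = CARD('n)) of full column rank,
  i.e. injective linear maps C^N -> C^M.\<close>
definition frames :: "(complex^'n::finite^'m::finite) set" where
  "frames = {A. inj ((*v) A)}"

text \<open>The complex Grassmannian Gr(N,M): N-dimensional complex subspaces of C^M,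
  realised as column spaces of frames.\<close>
definition grassmannian :: "('n::finite) itself \<Rightarrow> (complex^'m) set set" where
  "grassmannian t = {range ((*v) (A::complex^'n^'m)) | A. A \<in> frames}"

text \<open>Its standard topology: the quotient topology induced by the surjection
  frames -> Gr(N,M), A |-> column space of A.\<close>
definition gr_top :: "('n::finite) itself \<Rightarrow> (complex^'m::finite) set topology" where
  "gr_top t = topology (\<lambda>U. U \<subseteq> grassmannian t \<and>
      openin (top_of_set (frames :: (complex^'n^'m) set))
             {A \<in> frames. range ((*v) A) \<in> U})"

end

theory Submission
  imports Defs
begin

definition qc :: "complex^'m \<Rightarrow> complex^'m \<Rightarrow> bool" where
  "qc a b \<longleftrightarrow> (\<forall>i. Re (cnj (a$i) * b$i) = 0)"

definition bad :: "complex^'n^'m \<Rightarrow> bool" where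
  "bad A \<longleftrightarrow> (\<exists>x y. norm x = 1 \<and> norm y = 1 \<and> inner (\<i> *s x) y = 0 \<and> qc (A *v x) (A *v y))"

definition good :: "(complex^'m) set \<Rightarrow> bool" where
  "good W \<longleftrightarrow> (\<forall>a\<in>W. \<forall>b\<in>W. qc a b \<longrightarrow> a = 0 \<or> (\<exists>t::real. b = (\<i> * of_real t) *s a))"

lemma sc: "t *\<^sub>R (z::complex) = of_real t * z"
  by (simp add: scaleR_conv_of_real)

lemma mv_scaleR: "(A::complex^'n^'m) *v (c *\<^sub>R x) = c *\<^sub>R (A *v x)"
  by (simp add: vec_eq_iff matrix_vector_mult_def sc sum_distrib_left mult_ac)

lemma smult_scaleR: "c *s (a *\<^sub>R (x::complex^'n)) = a *\<^sub>R (c *s x)"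
  by (simp add: vec_eq_iff sc mult_ac)

lemma inner_ix_x: "inner (\<i> *s x) (x::complex^'n) = 0"
  by (simp add: inner_vec_def inner_complex_def)

lemma inner_ix_ix: "inner (\<i> *s x) (\<i> *s x) = inner (x::complex^'n) x"
  by (simp add: inner_vec_def inner_complex_def algebra_simps)

lemma smult_it: "(\<i> * of_real t) *s (x::complex^'n) = t *\<^sub>R (\<i> *s x)"
  by (simp add: vec_eq_iff sc)

lemma smult_real: "(of_real t) *s (x::complex^'n) = t *\<^sub>R x"
  by (simp add: vec_eq_iff sc)

lemma qc_scale: "qc a b \<Longrightarrow> qc (s *\<^sub>R a) (t *\<^sub>R (b - (\<i> * of_real u) *s a))"
  by (simp add: qc_def sc algebra_simps)

lemma noninj_bad: assumes "\<not> inj ((*v) (A::complex^'n^'m))" shows "bad A"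
proof -
  obtain x y where xy: "A *v x = A *v y" "x \<noteq> y" using assms unfolding inj_def by blast
  define z where "z = (1/norm (x - y)) *\<^sub>R (x - y)"
  have nz: "norm z = 1" using xy(2) by (simp add: z_def)
  have "A *v z = 0" using xy(1) by (simp add: z_def mv_scaleR matrix_vector_mult_diff_distrib)
  then show ?thesis unfolding bad_def qc_def
    by (intro exI[of _ z]) (use nz inner_ix_x[of z] in auto)
qed

lemma frames_bad_not_good:
  assumes "A \<in> frames" "bad A" shows "\<not> good (range ((*v) (A::complex^'n^'m)))"
proof
  assume g: "good (range ((*v) A))"
  obtain x y where h: "norm x = 1" "norm y = 1" "inner (\<i> *s x) y = 0" "qc (A *v x) (A *v y)"
    using assms(2) unfolding bad_def by blast
  have inj: "inj ((*v) A)" using assms(1) by (simp add: frames_def)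
  from g h(4) have "A *v x = 0 \<or> (\<exists>t::real. A *v y = (\<i> * of_real t) *s (A *v x))"
    unfolding good_def by blast
  then show False
  proof
    assume "A *v x = 0"
    then have "x = 0" using inj by (metis injD matrix_vector_mult_0_right)
    then show False using h(1) by simp
  next
    assume "\<exists>t::real. A *v y = (\<i> * of_real t) *s (A *v x)"
    then obtain t where "A *v y = A *v ((\<i> * of_real t) *s x)" by (auto simp: vector_scalar_commute)
    then have y: "y = t *\<^sub>R (\<i> *s x)" using inj by (metis injD smult_it)
    have "inner (\<i> *s x) y = t * inner x x" unfolding y by (simp add: inner_ix_ix)
    also have "inner x x = 1" using h(1) by (simp add: dot_square_norm)
    finally have "t = 0" using h(3) by simp
    then show False using h(2) y by simp
  qed
qed

lemma not_bad_good:
  assumes "\<not> bad A" shows "good (range ((*v) (A::complex^'n^'m)))"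
  unfolding good_def
proof (intro ballI impI)
  fix a b assume "a \<in> range ((*v) A)" "b \<in> range ((*v) A)" and qab: "qc a b"
  then obtain x y where xy: "a = A *v x" "b = A *v y" by auto
  show "a = 0 \<or> (\<exists>t::real. b = (\<i> * of_real t) *s a)"
  proof (rule ccontr)
    assume nn: "\<not> ?thesis"
    then have nz: "A *v x \<noteq> 0" and nt: "\<not> (\<exists>t::real. A *v y = (\<i> * of_real t) *s (A *v x))"
      using xy by auto
    have q: "qc (A *v x) (A *v y)" using qab xy by simp
    have x0: "x \<noteq> 0" using nz by auto
    define t where "t = inner (\<i> *s x) y / inner x x"
    define y' where "y' = y - (\<i> * of_real t) *s x"
    have xx: "inner x x \<noteq> 0" using x0 by simp
    have o: "inner (\<i> *s x) y' = 0"
      using xx by (simp only: y'_def smult_it inner_diff_right inner_scaleR_right inner_ix_ix t_def) simp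
    have y0: "y' \<noteq> 0"
    proof
      assume "y' = 0"
      then have "y = (\<i> * of_real t) *s x" by (simp add: y'_def)
      then have "A *v y = (\<i> * of_real t) *s (A *v x)" by (simp add: vector_scalar_commute)
      then show False using nt by blast
    qed
    define x1 where "x1 = (1/norm x) *\<^sub>R x"
    define y1 where "y1 = (1/norm y') *\<^sub>R y'"
    have "qc (A *v x1) (A *v y1)"
      using qc_scale[OF q, of "1/norm x" "1/norm y'" t]
      by (simp add: x1_def y1_def y'_def mv_scaleR matrix_vector_mult_diff_distrib vector_scalar_commute)
    moreover have "norm x1 = 1" "norm y1 = 1" using x0 y0 by (auto simp: x1_def y1_def)
    moreover have "inner (\<i> *s x1) y1 = 0"
      using o by (simp add: x1_def y1_def smult_scaleR)
    ultimately show False using assms unfolding bad_def by blast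
  qed
qed


lemma closed_bad: "closed {A::complex^'n^'m. bad A}"
  unfolding closed_sequential_limits
proof (intro allI impI, elim conjE)
  fix As :: "nat \<Rightarrow> complex^'n^'m" and A
  assume b: "\<forall>n. As n \<in> {A. bad A}" and lim: "As \<longlonglongrightarrow> A"
  have "\<forall>n. \<exists>p. p \<in> sphere 0 1 \<times> sphere 0 1 \<and> inner (\<i> *s fst p) (snd p) = 0 \<and> qc (As n *v fst p) (As n *v snd p)"
    using b unfolding bad_def by force
  then obtain p where p: "\<And>n. p n \<in> sphere 0 1 \<times> sphere 0 1" "\<And>n. inner (\<i> *s fst (p n)) (snd (p n)) = 0"
      "\<And>n. qc (As n *v fst (p n)) (As n *v snd (p n))"
    by metis
  have "compact (sphere (0::complex^'n) 1 \<times> sphere (0::complex^'n) 1)"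
    by (intro compact_Times compact_sphere)
  then obtain l r where l: "l \<in> sphere 0 1 \<times> sphere 0 1" and r: "strict_mono r" and pl: "(p \<circ> r) \<longlonglongrightarrow> l"
    using compact_imp_seq_compact p(1) unfolding seq_compact_def by metis
  have Al: "(As \<circ> r) \<longlonglongrightarrow> A" using LIMSEQ_subseq_LIMSEQ[OF lim r] .
  have xl: "(\<lambda>n. fst (p (r n))) \<longlonglongrightarrow> fst l" and yl: "(\<lambda>n. snd (p (r n))) \<longlonglongrightarrow> snd l"
    using tendsto_fst[OF pl] tendsto_snd[OF pl] by (simp_all add: o_def)
  have Ar: "(\<lambda>n. As (r n)) \<longlonglongrightarrow> A" using Al by (simp add: o_def)
  have "(\<lambda>n. inner (\<i> *s fst (p (r n))) (snd (p (r n)))) \<longlonglongrightarrow> inner (\<i> *s fst l) (snd l)"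
    unfolding vector_scalar_mult_def by (intro tendsto_intros xl yl)
  moreover have "(\<lambda>n. inner (\<i> *s fst (p (r n))) (snd (p (r n)))) = (\<lambda>n. 0)"
    using p(2) by simp
  ultimately have o: "inner (\<i> *s fst l) (snd l) = 0"
    by (simp add: LIMSEQ_const_iff)
  have q: "qc (A *v fst l) (A *v snd l)"
    unfolding qc_def
  proof
    fix i
    have "(\<lambda>n. Re (cnj ((As (r n) *v fst (p (r n))) $ i) * (As (r n) *v snd (p (r n))) $ i))
          \<longlonglongrightarrow> Re (cnj ((A *v fst l) $ i) * (A *v snd l) $ i)"
      unfolding matrix_vector_mult_def by (intro tendsto_intros xl yl Ar)
    moreover have "(\<lambda>n. Re (cnj ((As (r n) *v fst (p (r n))) $ i) * (As (r n) *v snd (p (r n))) $ i)) = (\<lambda>n. 0)"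
      using p(3) unfolding qc_def by blast
    ultimately show "Re (cnj ((A *v fst l) $ i) * (A *v snd l) $ i) = 0"
      by (simp add: LIMSEQ_const_iff)
  qed
  show "A \<in> {A. bad A}"
    unfolding bad_def mem_Collect_eq using l o q by (intro exI[of _ "fst l"] exI[of _ "snd l"]) auto
qed


lemma cone:
  assumes "Re (cnj p * q) = 0"
  shows "\<exists>r \<theta> s. p = of_real r * cis \<theta> \<and> q = \<i> * of_real s * cis \<theta>"
proof -
  define \<theta> where "\<theta> = (if p \<noteq> 0 then Arg p else Arg q - pi/2)"
  define u where "u = q * cis (- \<theta>)"
  have pe: "p = of_real (cmod p) * cis \<theta>"
  proof (cases "p = 0")
    case False then show ?thesis using rcis_cmod_Arg[of p] by (simp add: \<theta>_def rcis_def)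
  qed simp
  have qu: "q = u * cis \<theta>" by (simp add: u_def cis_mult flip: mult.assoc)
  have "Re u = 0"
  proof (cases "p = 0")
    case False
    have "cnj p = of_real (cmod p) * cis (- \<theta>)" using pe by (metis cis_cnj complex_cnj_complex_of_real complex_cnj_mult)
    then have "cnj p * q = of_real (cmod p) * u" by (simp add: u_def mult_ac)
    then have "cmod p * Re u = 0" using assms by simp
    then show ?thesis using False by simp
  next
    case True
    have c2: "cis (pi/2) = \<i>" by (simp add: complex_eq_iff)
    have "cis (- \<theta>) = cis (- Arg q) * cis (pi/2)"
      unfolding cis_mult by (simp add: \<theta>_def True)
    then have "u = q * cis (- Arg q) * cis (pi/2)" by (simp add: u_def mult.assoc)
    also have "q * cis (- Arg q) = of_real (cmod q)"
      using rcis_cmod_Arg[of q] by (metis (no_types, lifting) cis_mult mult.assoc mult.right_neutral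
          rcis_def add.right_inverse cis_zero)
    finally show ?thesis by simp
  qed
  then have "u = \<i> * of_real (Im u)" by (simp add: complex_eq_iff)
  then show ?thesis using pe qu by (metis)
qed


definition enc :: "(nat \<times> 'n \<Rightarrow> 'm) \<Rightarrow> 'n \<Rightarrow> complex^'n^'m \<Rightarrow> nat \<Rightarrow> 'n \<Rightarrow> real" where
  "enc g k P b l = Im (P $ g (b,l) $ k)"
definition xx :: "(nat \<times> 'n \<Rightarrow> 'm) \<Rightarrow> 'n \<Rightarrow> 'n \<Rightarrow> complex^'n^'m \<Rightarrow> 'n \<Rightarrow> complex" where
  "xx g j k P l = (if l = j then 1 else Complex (enc g k P 0 l) (enc g k P 1 l))"
definition zz :: "(nat \<times> 'n \<Rightarrow> 'm) \<Rightarrow> 'n \<Rightarrow> 'n \<Rightarrow> complex^'n^'m \<Rightarrow> 'n \<Rightarrow> complex" where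
  "zz g j k P l = (if l = j then 0 else Complex (enc g k P 2 l) (enc g k P 3 l))"
definition yy :: "(nat \<times> 'n \<Rightarrow> 'm) \<Rightarrow> 'n \<Rightarrow> 'n \<Rightarrow> complex^'n^'m \<Rightarrow> real" where
  "yy g j k P = enc g k P 4 j"
definition vv :: "'n \<Rightarrow> complex^'n^'m \<Rightarrow> 'm \<Rightarrow> complex" where
  "vv j P i = of_real (Re (P$i$j)) * cis (Im (P$i$j))"
definition ww :: "'n \<Rightarrow> 'n \<Rightarrow> complex^'n^'m \<Rightarrow> 'm \<Rightarrow> complex" where
  "ww j k P i = \<i> * of_real (Re (P$i$k)) * cis (Im (P$i$j))"
definition ck :: "(nat \<times> 'n \<Rightarrow> 'm) \<Rightarrow> 'n \<Rightarrow> 'n \<Rightarrow> complex^'n^'m \<Rightarrow> 'm \<Rightarrow> complex" where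
  "ck g j k P i = (ww j k P i - of_real (yy g j k P) * vv j P i
       - (\<Sum>l\<in>-{j,k}. zz g j k P l * P$i$l)) / zz g j k P k"
definition col :: "(nat \<times> 'n \<Rightarrow> 'm) \<Rightarrow> 'n \<Rightarrow> 'n \<Rightarrow> complex^'n^'m \<Rightarrow> 'm \<Rightarrow> 'n \<Rightarrow> complex" where
  "col g j k P i l = (if l = k then ck g j k P i else P$i$l)"
definition cj :: "(nat \<times> 'n \<Rightarrow> 'm) \<Rightarrow> 'n \<Rightarrow> 'n \<Rightarrow> complex^'n^'m \<Rightarrow> 'm \<Rightarrow> complex" where
  "cj g j k P i = vv j P i - (\<Sum>l\<in>-{j}. xx g j k P l * col g j k P i l)"
definition Fm :: "(nat \<times> 'n \<Rightarrow> 'm) \<Rightarrow> 'n \<Rightarrow> 'n \<Rightarrow> complex^'n^'m \<Rightarrow> complex^'n^'m" where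
  "Fm g j k P = (\<chi> i l. if l = j then cj g j k P i else col g j k P i l)"
definition Sd :: "(nat \<times> 'n \<Rightarrow> 'm) \<Rightarrow> 'n \<Rightarrow> 'n \<Rightarrow> 'm \<Rightarrow> (complex^'n^'m) set" where
  "Sd g j k i0 = {P. Im (P $ i0 $ k) = 0 \<and> zz g j k P k \<noteq> 0}"

lemma bl_axis: "bounded_linear (\<lambda>c::'a::euclidean_space. axis i c)"
proof -
  have "linear (\<lambda>c::'a. axis i c)"
    by (rule linearI) (simp_all add: axis_def vec_eq_iff)
  then show ?thesis by (simp add: linear_conv_bounded_linear)
qed

lemma vec_differentiable:
  fixes f :: "'a::real_normed_vector \<Rightarrow> 'b::euclidean_space^'i"
  assumes "\<And>i. (\<lambda>x. f x $ i) differentiable F"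
  shows "f differentiable F"
proof -
  have eq: "f x = (\<Sum>i\<in>UNIV. axis i (f x $ i))" for x
    unfolding vec_eq_iff by (simp add: axis_def)
  have "(\<lambda>x. \<Sum>i\<in>UNIV. axis i (f x $ i)) differentiable F"
  proof (rule differentiable_sum, simp, rule ballI)
    fix i
    obtain D where D: "((\<lambda>x. f x $ i) has_derivative D) F" using assms[of i] unfolding differentiable_def by blast
    have "((\<lambda>x. axis i (f x $ i)) has_derivative (\<lambda>h. axis i (D h))) F"
      using bounded_linear.has_derivative[OF bl_axis D] .
    then show "(\<lambda>x. axis i (f x $ i)) differentiable F" unfolding differentiable_def by blast
  qed
  moreover have "(\<lambda>x. \<Sum>i\<in>UNIV. axis i (f x $ i)) = f" by (rule ext, rule eq[symmetric])
  ultimately show ?thesis by simp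
qed


lemma bl_entry: "bounded_linear (\<lambda>P::complex^'n^'m. P $ i $ l)"
  by (rule bounded_linear_compose[OF bounded_linear_vec_nth bounded_linear_vec_nth, unfolded o_def])

lemma d_entry[simp]: "(\<lambda>P::complex^'n^'m. P $ i $ l) differentiable F"
  by (rule bounded_linear_imp_differentiable[OF bl_entry])

lemma d_Re[simp]: "(\<lambda>P::complex^'n^'m. complex_of_real (Re (P $ i $ l))) differentiable F"
  by (rule bounded_linear_imp_differentiable,
      rule bounded_linear_compose[OF bounded_linear_of_real, of "\<lambda>P. Re (P $ i $ l)"],
      rule bounded_linear_compose[OF bounded_linear_Re bl_entry])

lemma d_Im[simp]: "(\<lambda>P::complex^'n^'m. complex_of_real (Im (P $ i $ l))) differentiable F"
  by (rule bounded_linear_imp_differentiable,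
      rule bounded_linear_compose[OF bounded_linear_of_real, of "\<lambda>P. Im (P $ i $ l)"],
      rule bounded_linear_compose[OF bounded_linear_Im bl_entry])

lemma d_cis[simp]: "(\<lambda>P::complex^'n^'m. cis (Im (P $ i $ l))) differentiable (at P0 within S)"
proof -
  have bl: "bounded_linear (\<lambda>P::complex^'n^'m. Im (P $ i $ l))"
    by (rule bounded_linear_compose[OF bounded_linear_Im bl_entry])
  show ?thesis unfolding differentiable_def
    using has_derivative_cis[OF bounded_linear.has_derivative[OF bl has_derivative_ident]] by blast
qed

lemma d_enc[simp]: "(\<lambda>P. complex_of_real (enc g k P b l)) differentiable F"
  unfolding enc_def by simp

lemma d_xx[simp]: "(\<lambda>P. xx g j k P l) differentiable (at P0 within S)"
  by (cases "l = j") (simp_all add: xx_def Complex_eq)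

lemma d_zz[simp]: "(\<lambda>P. zz g j k P l) differentiable (at P0 within S)"
  by (cases "l = j") (simp_all add: zz_def Complex_eq)

lemma d_yy[simp]: "(\<lambda>P. complex_of_real (yy g j k P)) differentiable F"
  unfolding yy_def by simp

lemma d_vv[simp]: "(\<lambda>P. vv j P i) differentiable (at P0 within S)"
  unfolding vv_def by simp

lemma d_ww[simp]: "(\<lambda>P. ww j k P i) differentiable (at P0 within S)"
  unfolding ww_def by simp

lemma d_ck: "zz g j k P0 k \<noteq> 0 \<Longrightarrow> (\<lambda>P. ck g j k P i) differentiable (at P0 within S)"
  unfolding ck_def by (intro differentiable_divide differentiable_diff differentiable_mult
      differentiable_sum ballI) auto

lemma d_col: "zz g j k P0 k \<noteq> 0 \<Longrightarrow> (\<lambda>P. col g j k P i l) differentiable (at P0 within S)"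
  by (cases "l = k") (simp_all add: col_def d_ck)

lemma d_cj: "zz g j k P0 k \<noteq> 0 \<Longrightarrow> (\<lambda>P. cj g j k P i) differentiable (at P0 within S)"
  unfolding cj_def by (intro differentiable_diff differentiable_mult
      differentiable_sum ballI d_col) auto

lemma d_Fm: "Fm g j k differentiable_on Sd g j k i0"
  unfolding differentiable_on_def
proof
  fix P0 assume "P0 \<in> Sd g j k i0"
  then have z: "zz g j k P0 k \<noteq> 0" by (simp add: Sd_def)
  show "Fm g j k differentiable at P0 within Sd g j k i0"
  proof (rule vec_differentiable)
    fix i show "(\<lambda>P. Fm g j k P $ i) differentiable at P0 within Sd g j k i0"
    proof (rule vec_differentiable)
      fix l show "(\<lambda>P. Fm g j k P $ i $ l) differentiable at P0 within Sd g j k i0"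
        by (cases "l = j") (simp_all add: Fm_def d_cj d_col z)
    qed
  qed
qed

lemma negl_Sd: "negligible (Sd g j (k::'n::finite) (i0::'m::finite))"
proof -
  define a :: "complex^'n^'m" where "a = axis i0 (axis k \<i>)"
  have a0: "a \<noteq> 0" by (simp add: a_def vec_eq_iff axis_def)
  have "Sd g j k i0 \<subseteq> {P. a \<bullet> P = 0}"
    by (auto simp: Sd_def a_def inner_axis' inner_complex_def)
  then show ?thesis using negligible_hyperplane[of a 0] a0 negligible_subset by blast
qed

lemma negl_chart: "negligible (Fm g j k ` Sd g j k i0)"
  by (rule negligible_differentiable_image_negligible[OF order_refl negl_Sd d_Fm])


definition Iset :: "'n \<Rightarrow> (nat \<times> 'n) set" where
  "Iset j = ({0,1,2,3} \<times> (-{j})) \<union> {(4, j)}"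

lemma sum_split1: "(\<Sum>l\<in>UNIV. f l) = f j + (\<Sum>l\<in>-{j}. f (l::'n::finite))"
  using sum.remove[of UNIV j f] by (simp add: Compl_eq_Diff_UNIV)

lemma sum_split2: "j \<noteq> k \<Longrightarrow> (\<Sum>l\<in>UNIV. f l) = f j + f k + (\<Sum>l\<in>-{j,k}. f (l::'n::finite))"
proof -
  assume jk: "j \<noteq> k"
  have "(\<Sum>l\<in>-{j}. f l) = f k + (\<Sum>l\<in>-{j,k}. f l)"
  proof -
    have "-{j} = insert k (-{j,k})" using jk by auto
    then show ?thesis by (simp add: sum.insert)
  qed
  then show ?thesis using sum_split1[of f j] by (simp add: add.assoc)
qed

lemma chart_cover:
  fixes A :: "complex^'n^'m" and g :: "nat \<times> 'n \<Rightarrow> 'm"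
  assumes jk: "j \<noteq> k" and inj: "inj_on g (Iset j)" and gI: "g ` (Iset j) \<subseteq> -{i0}"
    and xj: "x$j = 1" and zj: "z$j = 0" and zk: "z$k \<noteq> 0"
    and q: "qc (A *v x) (A *v (z + \<rho> *\<^sub>R x))"
  shows "A \<in> Fm g j k ` Sd g j k i0"
proof -
  define v where "v = A *v x"
  define w where "w = A *v (z + \<rho> *\<^sub>R x)"
  have "\<forall>i. \<exists>t. v$i = of_real (fst t) * cis (fst (snd t)) \<and> w$i = \<i> * of_real (snd (snd t)) * cis (fst (snd t))"
    using q cone unfolding qc_def v_def w_def by fastforce
  then obtain T where T: "\<And>i. v$i = of_real (fst (T i)) * cis (fst (snd (T i)))"
      "\<And>i. w$i = \<i> * of_real (snd (snd (T i))) * cis (fst (snd (T i)))"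
    by metis
  define val where "val = (\<lambda>(b::nat,l). if b = 0 then Re (x$l) else if b = 1 then Im (x$l)
      else if b = 2 then Re (z$l) else if b = 3 then Im (z$l) else \<rho>)"
  define slot where "slot = (\<lambda>i. if i \<in> g ` Iset j then val (the_inv_into (Iset j) g i) else 0)"
  define P :: "complex^'n^'m" where "P = (\<chi> i l. if l = j then Complex (fst (T i)) (fst (snd (T i)))
      else if l = k then Complex (snd (snd (T i))) (slot i) else A$i$l)"
  have encP: "enc g k P b l = val (b,l)" if "(b,l) \<in> Iset j" for b l
    using that jk by (simp add: enc_def P_def slot_def the_inv_into_f_f[OF inj])
  have xxP: "xx g j k P l = x$l" for l
    by (cases "l = j") (simp_all add: xx_def xj encP Iset_def val_def complex_eq_iff)
  have zzP: "zz g j k P l = z$l" for l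
    by (cases "l = j") (simp_all add: zz_def zj encP Iset_def val_def complex_eq_iff)
  have yyP: "yy g j k P = \<rho>"
    by (simp add: yy_def encP Iset_def val_def)
  have vvP: "vv j P i = v$i" for i by (simp add: vv_def P_def T(1))
  have wwP: "ww j k P i = w$i" for i using jk by (simp add: ww_def P_def T(2))
  have i0: "i0 \<notin> g ` Iset j" using gI by blast
  have "Im (P$i0$k) = 0" using jk i0 by (simp add: P_def slot_def)
  then have PS: "P \<in> Sd g j k i0" using zk by (simp add: Sd_def zzP)
  have ckP: "ck g j k P i = A$i$k" for i
  proof -
    have "w$i = (\<Sum>l\<in>UNIV. A$i$l * z$l + of_real \<rho> * (A$i$l * x$l))"
      by (simp add: w_def matrix_vector_mult_def sc distrib_left mult.left_commute)
    also have "\<dots> = (\<Sum>l\<in>UNIV. A$i$l * z$l) + of_real \<rho> * v$i"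
      by (simp only: v_def matrix_vector_mult_def sum.distrib sum_distrib_left vec_lambda_beta)
    also have "(\<Sum>l\<in>UNIV. A$i$l * z$l) = A$i$k * z$k + (\<Sum>l\<in>-{j,k}. A$i$l * z$l)"
      using sum_split2[OF jk, of "\<lambda>l. A$i$l * z$l"] zj by simp
    finally have "w$i - of_real \<rho> * v$i - (\<Sum>l\<in>-{j,k}. z$l * P$i$l) = A$i$k * z$k"
      by (simp add: P_def mult.commute)
    then show ?thesis using zk
      by (simp add: ck_def zzP yyP vvP wwP)
  qed
  have colP: "col g j k P i l = A$i$l" if "l \<noteq> j" for i l
  proof (cases "l = k")
    case True then show ?thesis by (simp add: col_def ckP)
  next
    case False then show ?thesis using that by (simp add: col_def P_def)
  qed
  have cjP: "cj g j k P i = A$i$j" for i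
  proof -
    have "v$i = A$i$j + (\<Sum>l\<in>-{j}. A$i$l * x$l)"
      using sum_split1[of "\<lambda>l. A$i$l * x$l" j] xj by (simp add: v_def matrix_vector_mult_def)
    moreover have "(\<Sum>l\<in>-{j}. xx g j k P l * col g j k P i l) = (\<Sum>l\<in>-{j}. A$i$l * x$l)"
      by (rule sum.cong) (auto simp: xxP colP mult.commute)
    ultimately show ?thesis by (simp add: cj_def vvP)
  qed
  have "Fm g j k P = A"
    by (simp add: vec_eq_iff Fm_def cjP colP)
  then show ?thesis using PS by blast
qed


lemma qc_norm:
  assumes "qc a b"
  shows "qc (c *s a) (c *s b - (\<i> * of_real \<sigma>) *s (c *s a))"
  unfolding qc_def
proof
  fix i
  have h: "Re (cnj (a$i) * b$i) = 0" using assms by (simp add: qc_def)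
  have e1: "Re (cnj (c * a$i) * (c * b$i - \<i> * of_real \<sigma> * (c * a$i)))
      = ((Re c)^2 + (Im c)^2) * Re (cnj (a$i) * b$i)"
    by (simp add: algebra_simps power2_eq_square)
  have e2: "(c *s b - (\<i> * of_real \<sigma>) *s (c *s a)) $ i = c * b$i - \<i> * of_real \<sigma> * (c * a$i)"
    by simp
  have e3: "(c *s a) $ i = c * a$i" by simp
  show "Re (cnj ((c *s a) $ i) * (c *s b - (\<i> * of_real \<sigma>) *s (c *s a)) $ i) = 0"
    unfolding e2 e3 e1 h by simp
qed

lemma cover:
  fixes A :: "complex^'n^'m"
  assumes "bad A"
  shows "A = 0 \<or> (\<exists>j k. j \<noteq> k \<and> (\<forall>g i0. inj_on g (Iset j) \<longrightarrow> g ` Iset j \<subseteq> -{i0}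
            \<longrightarrow> A \<in> Fm g j k ` Sd g j k i0))"
proof -
  obtain x y where h: "norm x = 1" "norm y = 1" "inner (\<i> *s x) y = 0" "qc (A *v x) (A *v y)"
    using assms unfolding bad_def by blast
  have "x \<noteq> 0" using h(1) by auto
  then obtain j where xj: "x$j \<noteq> 0" by (auto simp: vec_eq_iff)
  define c where "c = 1 / x$j"
  have c0: "c \<noteq> 0" using xj by (simp add: c_def)
  define x' where "x' = c *s x"
  define y'' where "y'' = c *s y"
  define \<sigma> where "\<sigma> = Im (y''$j)"
  define \<rho> where "\<rho> = Re (y''$j)"
  define y' where "y' = y'' - (\<i> * of_real \<sigma>) *s x'"
  define z where "z = y' - \<rho> *\<^sub>R x'"
  have x'j: "x'$j = 1" using xj by (simp add: x'_def c_def)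
  have zj: "z$j = 0" using x'j by (simp add: z_def y'_def \<sigma>_def \<rho>_def complex_eq_iff)
  have zy: "z + \<rho> *\<^sub>R x' = y'" by (simp add: z_def)
  have q': "qc (A *v x') (A *v (z + \<rho> *\<^sub>R x'))"
    unfolding zy unfolding y'_def y''_def x'_def
    using qc_norm[OF h(4), of c \<sigma>] by (simp add: vector_scalar_commute matrix_vector_mult_diff_distrib)
  show ?thesis
  proof (cases "\<exists>k. z$k \<noteq> 0")
    case True
    then obtain k where zk: "z$k \<noteq> 0" by blast
    then have jk: "j \<noteq> k" using zj by auto
    show ?thesis using chart_cover[OF jk _ _ x'j zj zk q'] jk by blast
  next
    case False
    then have z0: "\<And>l. z$l = 0" by blast
    have yl: "y$l = (of_real \<rho> + \<i> * of_real \<sigma>) * x$l" for l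
    proof -
      have "c * (y$l - (of_real \<rho> + \<i> * of_real \<sigma>) * x$l) = 0"
        using z0[of l] by (simp add: z_def y'_def y''_def x'_def sc algebra_simps)
      then show ?thesis using c0 by simp
    qed
    have ye: "y = \<rho> *\<^sub>R x + \<sigma> *\<^sub>R (\<i> *s x)"
      by (simp add: vec_eq_iff yl sc algebra_simps)
    have "inner (\<i> *s x) y = \<sigma> * inner x x"
      unfolding ye by (simp add: inner_add_right inner_ix_x inner_ix_ix)
    moreover have "inner x x = 1" using h(1) by (simp add: dot_square_norm)
    ultimately have s0: "\<sigma> = 0" using h(3) by simp
    then have ye2: "y = \<rho> *\<^sub>R x" using ye by simp
    then have "\<rho> \<noteq> 0" using h(2) by auto
    have Ax: "A *v x = 0"
    proof -
      have "\<forall>i. Re (cnj ((A *v x)$i) * (\<rho> *\<^sub>R (A *v x))$i) = 0"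
        using h(4) unfolding ye2 qc_def mv_scaleR .
      then have "\<forall>i. \<rho> * ((Re ((A *v x)$i))^2 + (Im ((A *v x)$i))^2) = 0"
        by (simp add: sc algebra_simps power2_eq_square)
      then have "\<forall>i. (Re ((A *v x)$i))^2 + (Im ((A *v x)$i))^2 = 0"
        using \<open>\<rho> \<noteq> 0\<close> by simp
      then show ?thesis by (simp add: vec_eq_iff complex_eq_iff sum_power2_eq_zero_iff)
    qed
    then have Ax': "A *v x' = 0" by (simp add: x'_def vector_scalar_commute)
    show ?thesis
    proof (cases "\<exists>k. k \<noteq> j")
      case True
      then obtain k where "k \<noteq> j" by blast
      then have jk: "j \<noteq> k" by simp
      have zk: "axis k (1::complex) $ k \<noteq> 0" by simp
      have zj': "axis k (1::complex) $ j = 0" using jk by (simp add: axis_def)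
      have q0: "qc (A *v x') (A *v (axis k 1 + 0 *\<^sub>R x'))" using Ax' by (simp add: qc_def)
      show ?thesis using chart_cover[OF jk _ _ x'j zj' zk q0] jk by blast
    next
      case False
      then have allj: "\<And>l. l = j" by blast
      have "A = 0"
      proof (subst vec_eq_iff, rule allI)
        fix i
        have U: "(UNIV::'n set) = {j}" using allj by auto
        have e: "(A *v x')$i = A$i$j"
          by (simp add: matrix_vector_mult_def U x'j)
        show "A $ i = 0 $ i"
        proof (subst vec_eq_iff, intro allI)
          fix l :: 'n
          have "l = j" by (rule allj)
          then show "A$i$l = 0$i$l" using e Ax' by simp
        qed
      qed
      then show ?thesis by blast
    qed
  qed
qed


lemma card_Iset: "card (Iset (j::'n::finite)) = 4 * (CARD('n) - 1) + 1"
proof -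
  have c1: "card (-{j}) = CARD('n) - 1"
    by (simp add: Compl_eq_Diff_UNIV card_Diff_subset)
  have "card ({0,1,2,3::nat} \<times> (-{j})) = 4 * (CARD('n) - 1)"
    by (simp add: card_cartesian_product c1)
  moreover have "(4::nat, j) \<notin> {0,1,2,3::nat} \<times> (-{j})" by auto
  ultimately show ?thesis unfolding Iset_def
    by (simp add: card_Un_disjoint)
qed

lemma exists_g:
  assumes "CARD('m::finite) \<ge> 4 * CARD('n::finite) - 2"
  shows "\<exists>g::nat \<times> 'n \<Rightarrow> 'm. inj_on g (Iset (j::'n)) \<and> g ` Iset j \<subseteq> -{i0}"
proof -
  have n1: "CARD('n) \<ge> 1" by (simp add: Suc_leI)
  have c: "card (-{i0}) = CARD('m) - 1"
    by (simp add: Compl_eq_Diff_UNIV card_Diff_subset)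
  have "card (Iset j) \<le> card (-{i0})" unfolding c card_Iset using assms n1 by arith
  then show ?thesis using card_le_inj[of "Iset j" "-{i0}"] by (auto simp: Iset_def)
qed

lemma negligible_bad:
  assumes "CARD('m::finite) \<ge> 4 * CARD('n::finite) - 2"
  shows "negligible {A::complex^'n^'m. bad A}"
proof -
  define i0 :: 'm where "i0 = undefined"
  define G where "G = (\<lambda>j::'n. SOME g::nat \<times> 'n \<Rightarrow> 'm. inj_on g (Iset j) \<and> g ` Iset j \<subseteq> -{i0})"
  have G: "inj_on (G j) (Iset j) \<and> G j ` Iset j \<subseteq> -{i0}" for j
    unfolding G_def by (rule someI_ex[OF exists_g[OF assms]])
  have "{A::complex^'n^'m. bad A} \<subseteq> {0} \<union> \<Union>((\<lambda>(j,k). Fm (G j) j k ` Sd (G j) j k i0) ` UNIV)"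
  proof
    fix A :: "complex^'n^'m" assume "A \<in> {A. bad A}"
    then have "A = 0 \<or> (\<exists>j k. j \<noteq> k \<and> (\<forall>g i0. inj_on g (Iset j) \<longrightarrow> g ` Iset j \<subseteq> -{i0}
            \<longrightarrow> A \<in> Fm g j k ` Sd g j k i0))" using cover by blast
    then show "A \<in> {0} \<union> \<Union>((\<lambda>(j,k). Fm (G j) j k ` Sd (G j) j k i0) ` UNIV)"
    proof
      assume "\<exists>j k. j \<noteq> k \<and> (\<forall>g i0. inj_on g (Iset j) \<longrightarrow> g ` Iset j \<subseteq> -{i0}
            \<longrightarrow> A \<in> Fm g j k ` Sd g j k i0)"
      then obtain j k where "A \<in> Fm (G j) j k ` Sd (G j) j k i0" using G by blast
      then show ?thesis by blast
    qed simp
  qed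
  moreover have "negligible ({0} \<union> \<Union>((\<lambda>(j,k). Fm (G j) j k ` Sd (G j) j k i0) ` (UNIV :: ('n \<times> 'n) set)))"
    by (intro negligible_Un negligible_sing negligible_Union) (auto intro: negl_chart)
  ultimately show ?thesis using negligible_subset by blast
qed

lemma istop_gr: "istopology (\<lambda>U. U \<subseteq> grassmannian t \<and>
      openin (top_of_set (frames :: (complex^'n^'m) set))
             {A \<in> frames. range ((*v) A) \<in> U})"
  unfolding istopology_def
proof (rule conjI; intro allI impI)
  fix S T :: "(complex^'m) set set"
  assume S: "S \<subseteq> grassmannian t \<and> openin (top_of_set (frames :: (complex^'n^'m) set)) {A \<in> frames. range ((*v) A) \<in> S}"
    and T: "T \<subseteq> grassmannian t \<and> openin (top_of_set (frames :: (complex^'n^'m) set)) {A \<in> frames. range ((*v) A) \<in> T}"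
  have "{A \<in> (frames :: (complex^'n^'m) set). range ((*v) A) \<in> S \<inter> T} =
        {A \<in> frames. range ((*v) A) \<in> S} \<inter> {A \<in> frames. range ((*v) A) \<in> T}" by auto
  then show "S \<inter> T \<subseteq> grassmannian t \<and> openin (top_of_set (frames :: (complex^'n^'m) set)) {A \<in> frames. range ((*v) A) \<in> S \<inter> T}"
    using S T by (auto intro: openin_Int)
next
  fix K :: "(complex^'m) set set set"
  assume K: "\<forall>S\<in>K. S \<subseteq> grassmannian t \<and> openin (top_of_set (frames :: (complex^'n^'m) set)) {A \<in> frames. range ((*v) A) \<in> S}"
  have "{A \<in> (frames :: (complex^'n^'m) set). range ((*v) A) \<in> \<Union>K} =
        \<Union>((\<lambda>S. {A \<in> frames. range ((*v) A) \<in> S}) ` K)" by auto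
  then show "\<Union>K \<subseteq> grassmannian t \<and> openin (top_of_set (frames :: (complex^'n^'m) set)) {A \<in> frames. range ((*v) A) \<in> \<Union>K}"
    using K by (auto intro!: openin_Union)
qed

lemma openin_gr: "openin (gr_top (t::'n::finite itself)) U \<longleftrightarrow> U \<subseteq> grassmannian t \<and>
      openin (top_of_set (frames :: (complex^'n^'m::finite) set))
             {A \<in> frames. range ((*v) A) \<in> U}"
  unfolding gr_top_def by (subst topology_inverse'[OF istop_gr]) simp

lemma topspace_gr: "topspace (gr_top (t::'n::finite itself)) = (grassmannian t :: (complex^'m::finite) set set)"
proof -
  have "{A \<in> (frames :: (complex^'n^'m) set). range ((*v) A) \<in> grassmannian t} = frames"
    by (auto simp: grassmannian_def)
  then have "openin (gr_top t) (grassmannian t :: (complex^'m::finite) set set)"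
    unfolding openin_gr by simp
  moreover have "\<And>U. openin (gr_top t) (U :: (complex^'m::finite) set set) \<Longrightarrow> U \<subseteq> grassmannian t"
    unfolding openin_gr by blast
  ultimately show ?thesis unfolding topspace_def by blast
qed

lemma good_prop:
  assumes g: "good (range ((*v) (A::complex^'n^'m)))" and v: "v \<in> range ((*v) A)" and w: "w \<in> range ((*v) A)"
    and eq: "\<forall>i. cmod (v $ i) = cmod (w $ i)"
  shows "\<exists>c::complex. cmod c = 1 \<and> v = c *s w"
proof -
  obtain x y where xy: "v = A *v x" "w = A *v y" using v w by auto
  have ab: "v + w \<in> range ((*v) A)" "v - w \<in> range ((*v) A)"
  proof -
    have "v + w = A *v (x + y)" "v - w = A *v (x - y)"
      using xy by (simp_all add: matrix_vector_right_distrib matrix_vector_mult_diff_distrib)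
    then show "v + w \<in> range ((*v) A)" "v - w \<in> range ((*v) A)" by auto
  qed
  have q: "qc (v + w) (v - w)"
    unfolding qc_def
  proof
    fix i
    have "(cmod (v$i))^2 = (cmod (w$i))^2" using eq by simp
    then have "(Re (v$i))^2 + (Im (v$i))^2 = (Re (w$i))^2 + (Im (w$i))^2"
      by (simp add: cmod_def)
    then show "Re (cnj ((v + w) $ i) * (v - w) $ i) = 0"
      by (simp add: algebra_simps power2_eq_square)
  qed
  from g ab q have "v + w = 0 \<or> (\<exists>t::real. v - w = (\<i> * of_real t) *s (v + w))"
    unfolding good_def by blast
  then show ?thesis
  proof
    assume "v + w = 0"
    then have "v = (-1) *s w" by (simp add: vec_eq_iff add_eq_0_iff)
    then show ?thesis by (intro exI[of _ "-1"]) simp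
  next
    assume "\<exists>t::real. v - w = (\<i> * of_real t) *s (v + w)"
    then obtain t :: real where t: "v - w = (\<i> * of_real t) *s (v + w)" by blast
    have d: "1 - \<i> * of_real t \<noteq> 0" by (simp add: complex_eq_iff)
    define c where "c = (1 + \<i> * of_real t) / (1 - \<i> * of_real t)"
    have "v = c *s w"
    proof (subst vec_eq_iff, rule allI)
      fix i
      have "v$i - w$i = \<i> * of_real t * (v$i + w$i)" using t by (simp add: vec_eq_iff algebra_simps)
      then have "(1 - \<i> * of_real t) * v$i = (1 + \<i> * of_real t) * w$i" by (simp add: algebra_simps)
      then show "v $ i = (c *s w) $ i" using d by (simp add: c_def field_simps)
    qed
    moreover have "cmod c = 1"
    proof -
      have "cmod (1 + \<i> * of_real t) = cmod (1 - \<i> * of_real t)" by (simp add: cmod_def)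
      then show ?thesis using d by (simp add: c_def norm_divide)
    qed
    ultimately show ?thesis by blast
  qed
qed

theorem theorem3p1:
  assumes "CARD('m::finite) \<ge> 4 * CARD('n::finite) - 2"
  shows "\<exists>U. openin (gr_top TYPE('n)) U
           \<and> (gr_top TYPE('n)) closure_of U = grassmannian TYPE('n)
           \<and> (\<forall>W\<in>U. \<forall>v\<in>W. \<forall>w\<in>W.
                 (\<forall>i. cmod ((v::complex^'m) $ i) = cmod (w $ i))
                 \<longrightarrow> (\<exists>c::complex. cmod c = 1 \<and> v = c *s w))"
proof (intro exI conjI)
  define U where "U = {W \<in> grassmannian TYPE('n). good (W :: (complex^'m) set)}"
  have pre: "{A \<in> (frames :: (complex^'n^'m) set). range ((*v) A) \<in> U} = frames \<inter> - {A. bad A}"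
    using frames_bad_not_good not_bad_good by (auto simp: U_def grassmannian_def)
  show "openin (gr_top TYPE('n)) U"
    unfolding openin_gr pre
    by (auto simp: U_def openin_open intro!: exI[of _ "- {A. bad A}"] closed_bad)
  show "\<forall>W\<in>U. \<forall>v\<in>W. \<forall>w\<in>W. (\<forall>i. cmod ((v::complex^'m) $ i) = cmod (w $ i))
                 \<longrightarrow> (\<exists>c::complex. cmod c = 1 \<and> v = c *s w)"
    using good_prop by (fastforce simp: U_def grassmannian_def)
  show "gr_top TYPE('n) closure_of U = grassmannian TYPE('n)"
  proof
    show "gr_top TYPE('n) closure_of U \<subseteq> grassmannian TYPE('n)"
      using closure_of_subset_topspace topspace_gr by metis
  next
    show "grassmannian TYPE('n) \<subseteq> gr_top TYPE('n) closure_of U"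
    proof
      fix W assume W: "W \<in> (grassmannian TYPE('n) :: (complex^'m) set set)"
      then obtain A0 :: "complex^'n^'m" where A0: "A0 \<in> frames" "W = range ((*v) A0)"
        by (auto simp: grassmannian_def)
      show "W \<in> gr_top TYPE('n) closure_of U"
        unfolding in_closure_of topspace_gr
      proof (intro conjI W allI impI)
        fix T assume T: "W \<in> T \<and> openin (gr_top TYPE('n)) T"
        then obtain Op where Op: "open Op" "{A \<in> (frames :: (complex^'n^'m) set). range ((*v) A) \<in> T} = frames \<inter> Op"
          unfolding openin_gr openin_open by blast
        have "A0 \<in> Op" using Op(2) A0 T by blast
        then have "\<not> Op \<subseteq> {A. bad A}"
          using open_not_negligible[OF Op(1)] negligible_subset[OF negligible_bad[OF assms]] by blast
        then obtain A where A: "A \<in> Op" "\<not> bad A" by blast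
        then have Af: "A \<in> frames" using noninj_bad by (auto simp: frames_def)
        then have "range ((*v) A) \<in> T" using Op(2) A by blast
        moreover have "range ((*v) A) \<in> U"
          using Af A not_bad_good by (auto simp: U_def grassmannian_def)
        ultimately show "\<exists>y. y \<in> U \<and> y \<in> T" by blast
      qed
    qed
  qed
qed

end
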